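(* Let $n\in\mathbb{N}$. (i) Let $S$ be a symmetric numerical semigroup and $A\subseteq\{x\in S\mid \frac{\mathrm{F}(S)}{2}<x<\mathrm{F}(S)\}$ with $\#A=n$ such that $S\setminus A$ is a numerical semigroup. Then $\mathrm{l}(S\setminus A)=2n$. (ii) Conversely, for every numerical semigroup $T$ with $\mathrm{l}(T)=2n$ there exist a symmetric numerical semigroup $S$ with $\mathrm{F}(S)=\mathrm{F}(T)$ and a set $A\subseteq\{x\in S\mid \frac{\mathrm{F}(S)}{2}<x<\mathrm{F}(S)\}$ with $\#A=n$ such that $T=S\setminus A$.
   Context: A numerical semigroup is a subset $S\subseteq\mathbb{N}$ closed under addition with $0\in S$ and $\mathbb{N}\setminus S$ finite; $\mathrm{F}(S)=\max(\mathbb{Z}\setminus S)$. $\mathrm{N}(S)=\{s\in S\mid s<\mathrm{F}(S)\}$, $\mathrm{L}(S)=\{x\in\mathbb{N}\setminus S\mid \mathrm{F}(S)-x\notin \mathrm{N}(S)\}$, $\mathrm{l}(S)=\#\mathrm{L}(S)$. A numerical semigroup is irreducible if it is not the intersection of two numerical semigroups properly containing it; symmetric means irreducible with odd Frobenius number. *)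

theory Defs
  imports Complex_Main
begin

definition numerical_semigroup :: "nat set \<Rightarrow> bool" where
  "numerical_semigroup S \<longleftrightarrow> 0 \<in> S \<and> (\<forall>a\<in>S. \<forall>b\<in>S. a + b \<in> S) \<and> finite (UNIV - S)"

text \<open>Frobenius number: the largest integer not in S (equals -1 for S = N).\<close>
definition frob :: "nat set \<Rightarrow> int" where
  "frob S = (GREATEST z::int. z \<notin> int ` S)"

definition NS :: "nat set \<Rightarrow> nat set" where
  "NS S = {s \<in> S. int s < frob S}"

definition LS :: "nat set \<Rightarrow> nat set" where
  "LS S = {x \<in> UNIV - S. frob S - int x \<notin> int ` NS S}"

definition l_num :: "nat set \<Rightarrow> nat" where
  "l_num S = card (LS S)"

definition irreducible_ns :: "nat set \<Rightarrow> bool" where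
  "irreducible_ns S \<longleftrightarrow> numerical_semigroup S \<and>
     \<not> (\<exists>S1 S2. numerical_semigroup S1 \<and> numerical_semigroup S2 \<and>
               S \<subset> S1 \<and> S \<subset> S2 \<and> S = S1 \<inter> S2)"

definition symmetric_ns :: "nat set \<Rightarrow> bool" where
  "symmetric_ns S \<longleftrightarrow> irreducible_ns S \<and> odd (frob S)"

end

theory Submission
  imports Defs
begin


lemma frob_eqI:
  assumes "F \<notin> int ` S" "\<And>z. z > F \<Longrightarrow> z \<in> int ` S"
  shows "frob S = F"
  unfolding frob_def
proof (rule Greatest_equality)
  show "F \<notin> int ` S" by fact
  fix y assume "y \<notin> int ` S"
  then show "y \<le> F" using assms(2) by (meson not_le)
qed

lemma ns_frob:
  assumes "numerical_semigroup S"
  shows "frob S \<notin> int ` S" "\<And>z. z > frob S \<Longrightarrow> z \<in> int ` S"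
proof -
  have fin: "finite (UNIV - S)" using assms unfolding numerical_semigroup_def by blast
  define g where "g = (if UNIV - S = {} then -1 else int (Max (UNIV - S)))"
  have g1: "g \<notin> int ` S"
  proof (cases "UNIV - S = {}")
    case True then show ?thesis unfolding g_def by auto
  next
    case False
    then have "Max (UNIV - S) \<in> UNIV - S" using fin Max_in by blast
    then show ?thesis using False unfolding g_def by auto
  qed
  have g2: "z \<in> int ` S" if "z > g" for z
  proof -
    have "z \<ge> 0" using that unfolding g_def by (auto split: if_splits)
    then obtain m where m: "z = int m" by (metis nonneg_int_cases)
    show ?thesis
    proof (cases "UNIV - S = {}")
      case True
      then show ?thesis using m by auto
    next
      case False
      have "m > Max (UNIV - S)" using that False m unfolding g_def by auto
      then have "m \<in> S" using fin Max_ge by (metis DiffI UNIV_I not_le)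
      then show ?thesis using m by auto
    qed
  qed
  have "frob S = g" by (rule frob_eqI[OF g1 g2])
  then show "frob S \<notin> int ` S" "\<And>z. z > frob S \<Longrightarrow> z \<in> int ` S" using g1 g2 by auto
qed

lemma ns_gt: "numerical_semigroup S \<Longrightarrow> int x > frob S \<Longrightarrow> x \<in> S"
  using ns_frob(2) by force

lemma ns_gap_le: "numerical_semigroup S \<Longrightarrow> x \<notin> S \<Longrightarrow> int x \<le> frob S"
  using ns_gt by force

lemma ns_0: "numerical_semigroup S \<Longrightarrow> 0 \<in> S"
  unfolding numerical_semigroup_def by blast

lemma ns_add: "numerical_semigroup S \<Longrightarrow> a \<in> S \<Longrightarrow> b \<in> S \<Longrightarrow> a + b \<in> S"
  unfolding numerical_semigroup_def by blast

lemma ns_fin: "numerical_semigroup S \<Longrightarrow> finite (UNIV - S)"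
  unfolding numerical_semigroup_def by blast

lemma ns_frob_ge: "numerical_semigroup S \<Longrightarrow> frob S \<ge> -1"
proof (rule ccontr)
  assume "numerical_semigroup S" "\<not> frob S \<ge> -1"
  then have "(0::int) \<in> int ` S" "-1 \<in> int ` S" using ns_frob(2) by auto
  then show False by auto
qed

lemma ns_frob_ne0: "numerical_semigroup S \<Longrightarrow> frob S \<noteq> 0"
  using ns_frob(1) ns_0 by force

lemma ns_frob_nat: "numerical_semigroup S \<Longrightarrow> frob S \<ge> 0 \<Longrightarrow> nat (frob S) \<notin> S"
  using ns_frob(1) by force

lemma LS_char:
  assumes "numerical_semigroup T"
  shows "LS T = {x. x \<notin> T \<and> nat (frob T - int x) \<notin> T}"
proof -
  have "(frob T - int x \<in> int ` NS T) \<longleftrightarrow> nat (frob T - int x) \<in> T" if "x \<notin> T" for x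
  proof -
    have le: "int x \<le> frob T" using ns_gap_le assms that by blast
    have "x \<noteq> 0" using that ns_0[OF assms] by metis
    then have pos: "int x > 0" by simp
    show ?thesis
    proof
      assume "frob T - int x \<in> int ` NS T"
      then obtain s where "s \<in> T" "frob T - int x = int s" unfolding NS_def by auto
      then show "nat (frob T - int x) \<in> T" by simp
    next
      assume h: "nat (frob T - int x) \<in> T"
      have "nat (frob T - int x) \<in> NS T" unfolding NS_def using h le pos by auto
      moreover have "frob T - int x = int (nat (frob T - int x))" using le by simp
      ultimately show "frob T - int x \<in> int ` NS T" by (metis image_eqI)
    qed
  qed
  then show ?thesis unfolding LS_def by auto
qed

lemma irr_sym:
  assumes irr: "irreducible_ns S" and odd: "odd (frob S)" and x: "x \<notin> S"
  shows "nat (frob S - int x) \<in> S"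
proof (rule ccontr)
  assume nx: "nat (frob S - int x) \<notin> S"
  have ns: "numerical_semigroup S" using irr irreducible_ns_def by blast
  define F where "F = frob S"
  define G where "G = {y. y \<notin> S \<and> nat (F - int y) \<notin> S}"
  have finG: "finite G" using ns_fin[OF ns] unfolding G_def by (rule finite_subset[rotated]) auto
  have xG: "x \<in> G" using nx x G_def F_def by auto
  define h where "h = Max G"
  have hG: "h \<in> G" using finG xG Max_in h_def by blast
  have hmax: "\<And>y. y \<in> G \<Longrightarrow> y \<le> h" using finG h_def by simp
  have hS: "h \<notin> S" and hS2: "nat (F - int h) \<notin> S" using hG G_def by auto
  have hle: "int h \<le> F" using ns_gap_le ns hS F_def by blast
  have h'G: "nat (F - int h) \<in> G" using hG hle hS unfolding G_def by auto
  then have "nat (F - int h) \<le> h" using hmax by blast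
  then have "F \<le> 2 * int h" using hle by linarith
  moreover have "F \<noteq> 2 * int h" using odd F_def by auto
  ultimately have h2: "F < 2 * int h" by simp
  have hF: "int h \<noteq> F" using hS2 ns_0[OF ns] by auto
  have "h \<noteq> 0" using hS ns_0[OF ns] by metis
  then have Fpos: "F \<ge> 1" using hle by linarith
  have clos: "h + s \<in> S" if s: "s \<in> S" "s > 0" for s
  proof -
    consider "int (h+s) > F" | "int (h+s) = F" | "int (h+s) < F" by linarith
    then show ?thesis
    proof cases
      case 1 then show ?thesis using ns_gt ns F_def by blast
    next
      case 2 then have "nat (F - int h) = s" by linarith
      then show ?thesis using hS2 s by auto
    next
      case 3
      show ?thesis
      proof (rule ccontr)
        assume c: "h + s \<notin> S"
        show False
        proof (cases "nat (F - int (h+s)) \<in> S")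
          case True
          then have "nat (F - int (h+s)) + s \<in> S" using ns_add ns s by blast
          moreover have "nat (F - int (h+s)) + s = nat (F - int h)" using 3 by linarith
          ultimately show False using hS2 by simp
        next
          case False
          then have "h + s \<in> G" using c G_def by auto
          then show False using hmax s by fastforce
        qed
      qed
    qed
  qed
  have hh: "h + h \<in> S" using ns_gt[OF ns] h2 F_def by simp
  define S1 where "S1 = insert h S"
  define S2 where "S2 = insert (nat F) S"
  have ns1: "numerical_semigroup S1"
    unfolding numerical_semigroup_def
  proof (intro conjI ballI)
    show "0 \<in> S1" using ns_0[OF ns] S1_def by auto
    show "finite (UNIV - S1)" using ns_fin[OF ns] S1_def by (auto intro: finite_subset)
    fix a b assume ab: "a \<in> S1" "b \<in> S1"
    have ha: "h + a \<in> S1" if "a \<in> S" for a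
      using clos[of a] that S1_def by (cases "a = 0") auto
    show "a + b \<in> S1"
      using ab ha[of a] ha[of b] hh ns_add[OF ns, of a b] S1_def by (auto simp: add.commute)
  qed
  have ns2: "numerical_semigroup S2"
    unfolding numerical_semigroup_def
  proof (intro conjI ballI)
    show "0 \<in> S2" using ns_0[OF ns] S2_def by auto
    show "finite (UNIV - S2)" using ns_fin[OF ns] S2_def by (auto intro: finite_subset)
    fix a b assume ab: "a \<in> S2" "b \<in> S2"
    have ha: "nat F + a \<in> S2" if "a \<in> S" for a
    proof (cases "a = 0")
      case True then show ?thesis using S2_def by auto
    next
      case False
      then have "int (nat F + a) > frob S" using Fpos F_def by simp
      then show ?thesis using ns_gt[OF ns] S2_def by blast
    qed
    have "int (nat F + nat F) > frob S" using Fpos F_def by simp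
    then have ff: "nat F + nat F \<in> S2" using ns_gt[OF ns] S2_def by blast
    show "a + b \<in> S2"
      using ab ha[of a] ha[of b] ff ns_add[OF ns, of a b] S2_def by (auto simp: add.commute)
  qed
  have nF: "nat F \<notin> S" using ns_frob_nat[OF ns] Fpos F_def by simp
  have "h \<noteq> nat F" using hF Fpos by auto
  then have "S = S1 \<inter> S2" "S \<subset> S1" "S \<subset> S2" using hS nF S1_def S2_def by auto
  then show False using irr ns1 ns2 unfolding irreducible_ns_def by blast
qed

lemma sym_irr:
  assumes ns: "numerical_semigroup S" and sym: "\<And>x. x \<notin> S \<Longrightarrow> nat (frob S - int x) \<in> S"
  shows "irreducible_ns S"
proof -
  have key: False if S1: "numerical_semigroup S1" "S \<subset> S1" "nat (frob S) \<notin> S1" for S1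
  proof -
    obtain y where y: "y \<in> S1" "y \<notin> S" using S1 by blast
    have le: "int y \<le> frob S" using ns_gap_le ns y by blast
    have "nat (frob S - int y) \<in> S1" using sym y S1 by blast
    then have "y + nat (frob S - int y) \<in> S1" using y S1 ns_add by blast
    moreover have "y + nat (frob S - int y) = nat (frob S)" using le by linarith
    ultimately show False using S1 by simp
  qed
  show ?thesis unfolding irreducible_ns_def
  proof (intro conjI notI)
    show "numerical_semigroup S" by fact
    assume "\<exists>S1 S2. numerical_semigroup S1 \<and> numerical_semigroup S2 \<and> S \<subset> S1 \<and> S \<subset> S2 \<and> S = S1 \<inter> S2"
    then obtain S1 S2 where S: "numerical_semigroup S1" "numerical_semigroup S2" "S \<subset> S1" "S \<subset> S2" "S = S1 \<inter> S2"
      by blast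
    show False
    proof (cases "frob S \<ge> 0")
      case True
      then have "nat (frob S) \<notin> S" using ns_frob_nat ns by blast
      then have "nat (frob S) \<notin> S1 \<or> nat (frob S) \<notin> S2" using S by blast
      then show False using key S by blast
    next
      case False
      then have "S = UNIV" using ns_gt[OF ns] by force
      then show False using S by blast
    qed
  qed
qed



lemma half_iff: "(real_of_int F / 2 < real (x::nat)) \<longleftrightarrow> F < 2 * int x"
proof -
  have "(real_of_int F / 2 < real x) \<longleftrightarrow> real_of_int F < real_of_int (2 * int x)" by (simp add: mult.commute)
  then show ?thesis by linarith
qed

lemma part1:
  assumes sym: "symmetric_ns S"
    and A: "A \<subseteq> {x \<in> S. real_of_int (frob S) / 2 < real x \<and> int x < frob S}"
    and nsT: "numerical_semigroup (S - A)"
  shows "l_num (S - A) = 2 * card A"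
proof -
  define F where "F = frob S"
  have irr: "irreducible_ns S" and odd: "odd F" using sym F_def symmetric_ns_def by auto
  have ns: "numerical_semigroup S" using irr irreducible_ns_def by blast
  have Ap: "a \<in> S \<and> F < 2 * int a \<and> int a < F" if "a \<in> A" for a
    using A that half_iff F_def by auto
  have symS: "nat (F - int x) \<in> S" if "x \<notin> S" for x using irr_sym[OF irr] odd that F_def by simp
  have asym: "nat (F - int x) \<notin> S" if "x \<in> S" "int x < F" for x
  proof
    assume "nat (F - int x) \<in> S"
    then have "x + nat (F - int x) \<in> S" using ns_add[OF ns] that by blast
    moreover have "x + nat (F - int x) = nat F" using that by linarith
    ultimately show False using ns_frob_nat[OF ns] that F_def by simp
  qed
  have fT: "frob (S - A) = F"
  proof (rule frob_eqI)
    show "F \<notin> int ` (S - A)" using ns_frob(1)[OF ns] F_def by auto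
    fix z assume z: "z > F"
    then obtain m where m: "z = int m" "m \<in> S" using ns_frob(2)[OF ns] F_def by auto
    have "m \<notin> A" using Ap z m by force
    then show "z \<in> int ` (S - A)" using m by auto
  qed
  define f where "f = (\<lambda>a::nat. nat (F - int a))"
  have L: "LS (S - A) = A \<union> f ` A"
  proof -
    have "LS (S - A) = {x. x \<notin> S - A \<and> nat (F - int x) \<notin> S - A}"
      using LS_char[OF nsT] fT by simp
    also have "\<dots> = A \<union> f ` A"
    proof (intro equalityI subsetI)
      fix x assume "x \<in> {x. x \<notin> S - A \<and> nat (F - int x) \<notin> S - A}"
      then have x: "x \<notin> S - A" "nat (F - int x) \<notin> S - A" by auto
      show "x \<in> A \<union> f ` A"
      proof (cases "x \<in> A")
        case False
        then have "x \<notin> S" using x by auto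
        then have "nat (F - int x) \<in> A" "int x \<le> F" using symS x ns_gap_le[OF ns] F_def by auto
        moreover have "x = f (nat (F - int x))" using \<open>int x \<le> F\<close> f_def by simp
        ultimately show ?thesis by blast
      qed simp
    next
      fix x assume "x \<in> A \<union> f ` A"
      then show "x \<in> {x. x \<notin> S - A \<and> nat (F - int x) \<notin> S - A}"
      proof
        assume xA: "x \<in> A"
        then show ?thesis using Ap[OF xA] asym[of x] by auto
      next
        assume "x \<in> f ` A"
        then obtain a where a: "a \<in> A" "x = f a" by auto
        have "x \<notin> S" using a Ap[OF a(1)] asym[of a] f_def by auto
        moreover have "nat (F - int x) = a" using a Ap[OF a(1)] f_def by simp
        ultimately show ?thesis using a by auto
      qed
    qed
    finally show ?thesis .
  qed
  have finA: "finite A"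
  proof (rule finite_subset)
    show "A \<subseteq> {..< nat F}" using Ap by fastforce
  qed simp
  have inj: "inj_on f A" unfolding inj_on_def f_def using Ap by fastforce
  have disj: "A \<inter> f ` A = {}"
  proof (rule ccontr)
    assume "A \<inter> f ` A \<noteq> {}"
    then obtain a b where ab: "a \<in> A" "b \<in> A" "a = f b" by blast
    then show False using Ap[OF ab(1)] Ap[OF ab(2)] f_def by simp
  qed
  have "card (A \<union> f ` A) = card A + card (f ` A)"
    using card_Un_disjoint[OF finA finite_imageI[OF finA] disj] .
  also have "card (f ` A) = card A" using card_image[OF inj] .
  finally show ?thesis unfolding l_num_def L by simp
qed



lemma part2:
  assumes nsT: "numerical_semigroup T" and lT: "l_num T = 2 * n"
  shows "\<exists>S A. symmetric_ns S \<and> frob S = frob T \<and>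
               A \<subseteq> {x \<in> S. real_of_int (frob S) / 2 < real x \<and> int x < frob S} \<and>
               card A = n \<and> T = S - A"
proof -
  define F where "F = frob T"
  define f where "f = (\<lambda>a::nat. nat (F - int a))"
  define L where "L = {x. x \<notin> T \<and> f x \<notin> T}"
  have LL: "LS T = L" using LS_char[OF nsT] L_def f_def F_def by simp
  have finL: "finite L" using ns_fin[OF nsT] unfolding L_def by (rule finite_subset[rotated]) auto
  have Lle: "int x \<le> F" if "x \<in> L" for x using that ns_gap_le[OF nsT] L_def F_def by auto
  have ff: "f (f x) = x" if "x \<in> L" for x using Lle[OF that] f_def by simp
  have fL: "f x \<in> L" if "x \<in> L" for x using that ff[OF that] L_def by auto
  define B where "B = {x\<in>L. F < 2 * int x}"
  define C where "C = {x\<in>L. 2 * int x < F}"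
  define M where "M = {x\<in>L. 2 * int x = F}"
  have CB: "C = f ` B"
  proof (intro equalityI subsetI)
    fix x assume x: "x \<in> C"
    then have "x \<in> L" using C_def by auto
    then have "f x \<in> B" "x = f (f x)" using x fL Lle ff unfolding B_def C_def f_def by auto
    then show "x \<in> f ` B" by blast
  next
    fix x assume "x \<in> f ` B"
    then obtain b where b: "b \<in> B" "x = f b" by auto
    then show "x \<in> C" using fL Lle unfolding B_def C_def f_def by auto
  qed
  have inj: "inj_on f B" unfolding inj_on_def B_def using ff by (metis (no_types, lifting) mem_Collect_eq)
  have finB: "finite B" "finite C" "finite M" using finL B_def C_def M_def by auto
  have Lsplit: "L = B \<union> C \<union> M" using B_def C_def M_def by auto
  have cardL: "card L = card B + card C + card M"
  proof -
    have d1: "(B \<union> C) \<inter> M = {}" "B \<inter> C = {}" using B_def C_def M_def by auto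
    have "card (B \<union> C \<union> M) = card (B \<union> C) + card M"
      using card_Un_disjoint[of "B \<union> C" M] finB d1 by auto
    also have "card (B \<union> C) = card B + card C" using card_Un_disjoint finB d1 by blast
    finally show ?thesis using Lsplit by simp
  qed
  have cC: "card C = card B" using CB card_image[OF inj] by simp
  have oddF: "odd F"
  proof
    assume ev: "even F"
    have "F \<ge> -1" "F \<noteq> 0" using ns_frob_ge[OF nsT] ns_frob_ne0[OF nsT] F_def by auto
    with ev have F2: "F \<ge> 2" by presburger
    define m where "m = nat (F div 2)"
    have "int m = F div 2" using F2 m_def by simp
    then have m2: "2 * int m = F" using ev by presburger
    have "m \<notin> T"
    proof
      assume "m \<in> T"
      then have "m + m \<in> T" using ns_add[OF nsT] by blast
      moreover have "m + m = nat F" using m2 by linarith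
      ultimately show False using ns_frob_nat[OF nsT] F2 F_def by simp
    qed
    moreover have "f m = m" using m2 f_def by simp
    ultimately have "m \<in> M" using M_def L_def m2 by auto
    moreover have "M \<subseteq> {m}" using M_def m2 by auto
    ultimately have "M = {m}" by blast
    then have "card L = 2 * card B + 1" using cardL cC by simp
    moreover have "card L = 2 * n" using lT LL l_num_def by simp
    ultimately show False by presburger
  qed
  have "M = {}" using oddF M_def by auto
  then have cB: "card B = n" using cardL cC lT LL l_num_def by simp
  define S where "S = T \<union> B"
  have BT: "B \<inter> T = {}" using B_def L_def by auto
  have Bp: "F < 2 * int b \<and> int b < F \<and> b \<notin> T \<and> f b \<notin> T" if "b \<in> B" for b
  proof -
    have bL: "b \<in> L" using that B_def by auto
    have "int b \<noteq> F" using bL ns_0[OF nsT] L_def f_def by auto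
    then show ?thesis using Lle[OF bL] that B_def L_def by auto
  qed
  have clos: "b + t \<in> S" if b: "b \<in> B" and t: "t \<in> T" for b t
  proof (cases "t = 0")
    case True then show ?thesis using b S_def by auto
  next
    case tpos: False
    consider "int (b+t) > F" | "int (b+t) = F" | "int (b+t) < F" by linarith
    then show ?thesis
    proof cases
      case 1 then show ?thesis using ns_gt[OF nsT] F_def S_def by auto
    next
      case 2 then have "f b = t" using f_def by simp
      then show ?thesis using Bp[OF b] t by auto
    next
      case 3
      show ?thesis
      proof (cases "b + t \<in> T")
        case True then show ?thesis using S_def by auto
      next
        case False
        have "f (b + t) \<notin> T"
        proof
          assume "f (b + t) \<in> T"
          then have "f (b + t) + t \<in> T" using ns_add[OF nsT] t by blast
          moreover have "f (b + t) + t = f b" using 3 f_def by simp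
          ultimately show False using Bp[OF b] by simp
        qed
        then have "b + t \<in> B" using False B_def L_def Bp[OF b] by auto
        then show ?thesis using S_def by auto
      qed
    qed
  qed
  have nsS: "numerical_semigroup S"
    unfolding numerical_semigroup_def
  proof (intro conjI ballI)
    show "0 \<in> S" using ns_0[OF nsT] S_def by auto
    show "finite (UNIV - S)" using ns_fin[OF nsT] S_def by (auto intro: finite_subset)
    fix a b assume ab: "a \<in> S" "b \<in> S"
    show "a + b \<in> S"
    proof (cases "a \<in> B")
      case aB: True
      show ?thesis
      proof (cases "b \<in> B")
        case True
        then have "int (a + b) > F" using Bp[OF True] Bp[OF aB] by simp
        then show ?thesis using ns_gt[OF nsT] F_def S_def by auto
      next
        case False then show ?thesis using clos aB ab S_def by auto
      qed
    next
      case aT: False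
      then have "a \<in> T" using ab S_def by auto
      show ?thesis
      proof (cases "b \<in> B")
        case True then show ?thesis using clos[of b a] \<open>a \<in> T\<close> by (simp add: add.commute)
      next
        case False then show ?thesis using ns_add[OF nsT] \<open>a \<in> T\<close> ab S_def by auto
      qed
    qed
  qed
  have fS: "frob S = F"
  proof (rule frob_eqI)
    show "F \<notin> int ` S" using ns_frob(1)[OF nsT] Bp F_def S_def by fastforce
    fix z assume "z > F"
    then show "z \<in> int ` S" using ns_frob(2)[OF nsT] F_def S_def by auto
  qed
  have symS: "nat (frob S - int x) \<in> S" if x: "x \<notin> S" for x
  proof -
    have xT: "x \<notin> T" "x \<notin> B" using x S_def by auto
    show ?thesis
    proof (cases "f x \<in> T")
      case True then show ?thesis using fS f_def S_def by auto
    next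
      case False
      then have xL: "x \<in> L" using xT L_def by auto
      then have "\<not> F < 2 * int x" using xT B_def by auto
      moreover have "F \<noteq> 2 * int x" using oddF by auto
      ultimately have "2 * int x < F" by simp
      then have "f x \<in> B" using fL[OF xL] Lle[OF xL] B_def f_def by auto
      then show ?thesis using fS f_def S_def by auto
    qed
  qed
  have symm: "symmetric_ns S" unfolding symmetric_ns_def using sym_irr[OF nsS symS] fS oddF by simp
  have Asub: "B \<subseteq> {x \<in> S. real_of_int (frob S) / 2 < real x \<and> int x < frob S}"
    using Bp fS S_def half_iff by auto
  have "T = S - B" using S_def BT by auto
  then show ?thesis using symm fS F_def Asub cB by blast
qed


theorem proposition19:
  fixes n :: nat
  shows "(\<forall>S A. symmetric_ns S \<longrightarrow>
            A \<subseteq> {x \<in> S. real_of_int (frob S) / 2 < real x \<and> int x < frob S} \<longrightarrow>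
            card A = n \<longrightarrow> numerical_semigroup (S - A) \<longrightarrow>
            l_num (S - A) = 2 * n)
       \<and> (\<forall>T. numerical_semigroup T \<longrightarrow> l_num T = 2 * n \<longrightarrow>
            (\<exists>S A. symmetric_ns S \<and> frob S = frob T \<and>
               A \<subseteq> {x \<in> S. real_of_int (frob S) / 2 < real x \<and> int x < frob S} \<and>
               card A = n \<and> T = S - A))"
  using part1 part2 by blast

end
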